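(* For each $j\ge0$ the polynomial $c_j(q)$ has degree $j$, leading coefficient $(-1)^jj!\,G_j$ and constant term $B_j$. Moreover, in $\mathbb Q[q][[t]]$, \[ \sum_{j\ge0}c_j(q)\frac{t^j}{j!}=\frac{t}{(1-qt)^{-1/q}-1}. \]
   Context: Let $q$ be a variable. For $a$ in a commutative ring, $k$ in it and $i\in\mathbb N_0$, $(a)_{k,i}=a(a+k)\cdots(a+(i-1)k)$ (with $(a)_{k,0}=1$). The sequence $(c_i(q))_{i\ge0}$ in $\mathbb Q[q]$ is defined recursively by $\sum_{i=0}^{j}\frac{(1)_{q,j+1-i}}{(j+1-i)!}\frac{c_i(q)}{i!}=\delta_{j,0}$ for all $j\ge0$ (so $c_0=1$). The Bernoulli numbers $B_j$ are defined by $\sum_{i=0}^{j}\binom{j+1}{i}B_i=\delta_{j,0}$ for $j\ge0$. The Gregory coefficients $G_j$ are defined by $\sum_{j\ge0}G_jt^j=t/\ln(1+t)$ (so $G_0=1$, $G_1=1/2$, $G_2=-1/12$). *)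

theory Defs
  imports "HOL-Computational_Algebra.Computational_Algebra"
begin

definition gpoch :: "'a::comm_ring_1 \<Rightarrow> 'a \<Rightarrow> nat \<Rightarrow> 'a" where
  "gpoch a k i = (\<Prod>m<i. a + of_nat m * k)"

abbreviation qvar :: "rat poly" where "qvar \<equiv> [:0, 1:]"

text \<open>Gregory coefficients: sum_j G_j t^j = t / ln(1+t); fps_ln 1 is ln(1+t).\<close>
definition gregory :: "nat \<Rightarrow> rat" where
  "gregory j = (fps_X / fps_ln 1) $ j"

text \<open>The formal power series (1 - q t)^(-1/q) over Q for a fixed nonzero rational q,
  i.e. the binomial series (1+X)^(-1/q) composed with -q X.\<close>
definition powq_series :: "rat \<Rightarrow> rat fps" where
  "powq_series q = fps_binomial (-1/q) oo (fps_const (-q) * fps_X)"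

end

theory Submission imports Defs begin

lemma powq_nth:
  assumes q: "q \<noteq> 0"
  shows "powq_series q $ n = gpoch 1 q n / fact n"
proof -
  have "powq_series q $ n = (-q)^n * ((-1/q) gchoose n)"
    by (simp add: powq_series_def)
  also have "\<dots> = (\<Prod>i<n. (-q) * (-1/q - of_nat i)) / fact n"
  proof -
    have "(\<Prod>i<n. (-q) * (-1/q - of_nat i)) = (\<Prod>i<n. -q) * (\<Prod>i<n. (-1/q - of_nat i))"
      by (rule prod.distrib)
    then show ?thesis by (simp add: gbinomial_prod_rev atLeast0LessThan)
  qed
  also have "(\<Prod>i<n. (-q) * (-1/q - of_nat i)) = gpoch 1 q n"
    unfolding gpoch_def using q by (intro prod.cong) (auto simp: field_simps)
  finally show ?thesis .
qed

lemma X_div_X_times: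
  fixes F :: "rat fps"
  assumes "F $ 0 \<noteq> 0"
  shows "fps_X / (fps_X * F) = inverse F"
proof -
  have "fps_X / (fps_X * F) = (fps_X * 1) / (fps_X * F)" by simp
  also have "\<dots> = 1 / F" by (rule div_mult_mult1) simp
  also have "\<dots> = inverse F" using assms by (simp add: fps_divide_unit)
  finally show ?thesis .
qed

lemma uniq:
  fixes x y :: "nat \<Rightarrow> rat"
  assumes "\<And>j. (\<Sum>i\<le>j. a j i * x i) = d j" "\<And>j. (\<Sum>i\<le>j. a j i * y i) = d j"
    and "\<And>j. a j j \<noteq> 0"
  shows "x j = y j"
proof (induction j rule: less_induct)
  case (less j)
  have e: "(\<Sum>i<j. a j i * x i) = (\<Sum>i<j. a j i * y i)"
    using less by (intro sum.cong) auto
  have "a j j * x j + (\<Sum>i<j. a j i * x i) = a j j * y j + (\<Sum>i<j. a j i * y i)"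
    using assms(1,2)[of j] by (simp add: lessThan_Suc_atMost[symmetric] add.commute)
  then show ?case using e assms(3)[of j] by simp
qed

lemma gpoch_poly: "poly (gpoch 1 qvar n) x = gpoch 1 x n"
  by (simp add: gpoch_def poly_prod mult.commute)

lemma gpoch_deg: "degree (gpoch 1 qvar (Suc n)) \<le> n \<and> coeff (gpoch 1 qvar (Suc n)) n = fact n"
proof (induction n)
  case 0 then show ?case by (simp add: gpoch_def)
next
  case (Suc n)
  have eq: "gpoch 1 qvar (Suc (Suc n)) = gpoch 1 qvar (Suc n) * [:1, of_nat (Suc n):]"
  proof -
    have "[:1, of_nat (Suc n):] = 1 + of_nat (Suc n) * (qvar :: rat poly)"
      by (simp add: of_nat_poly one_pCons)
    then show ?thesis unfolding gpoch_def by (simp only: prod.lessThan_Suc)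
  qed
  have d: "degree [:1, of_nat (Suc n) :: rat:] \<le> 1" by simp
  have "degree (gpoch 1 qvar (Suc (Suc n))) \<le> Suc n"
    unfolding eq using degree_mult_le[of "gpoch 1 qvar (Suc n)" "[:1, of_nat (Suc n):]"] Suc d by linarith
  moreover have "coeff (gpoch 1 qvar (Suc (Suc n))) (Suc n) = fact (Suc n)"
  proof -
    have "coeff (gpoch 1 qvar (Suc n)) (Suc n) = 0" using Suc by (intro coeff_eq_0) auto
    then show ?thesis unfolding eq using Suc by simp
  qed
  ultimately show ?case by simp
qed


lemma greg_rec:
  "(\<Sum>i\<le>j. (1 / of_nat (j + 1 - i)) * ((-1)^i * gregory i)) = (if j = 0 then 1 else (0::rat))"
proof -
  define D :: "rat fps" where "D = Abs_fps (\<lambda>n. (-1)^n / of_nat (Suc n))"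
  have lnD: "fps_ln 1 = fps_X * D"
    unfolding D_def by (intro fps_ext) (simp add: fps_ln_def of_nat_diff)
  have D0: "D $ 0 \<noteq> 0" by (simp add: D_def)
  have G: "gregory i = inverse D $ i" for i
    unfolding gregory_def lnD using X_div_X_times[OF D0] by simp
  have "inverse D * D = 1" using D0 by (rule inverse_mult_eq_1)
  then have "(inverse D * D) $ j = (if j = 0 then 1 else 0)" by simp
  then have e: "(\<Sum>i=0..j. gregory i * ((-1)^(j-i) / of_nat (Suc (j - i)))) = (if j = 0 then 1 else 0)"
    by (simp add: fps_mult_nth G D_def)
  have "(\<Sum>i\<le>j. (1 / of_nat (j + 1 - i)) * ((-1)^i * gregory i))
      = (-1)^j * (\<Sum>i=0..j. gregory i * ((-1)^(j-i) / of_nat (Suc (j - i))))"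
    unfolding sum_distrib_left atLeast0AtMost
  proof (intro sum.cong refl)
    fix i assume "i \<in> {..j}"
    then have "(-1::rat)^j = (-1)^i * (-1)^(j-i)" by (simp add: power_add[symmetric])
    moreover have "((-1::rat)^(j-i))^2 = 1" by (simp add: power_mult[symmetric] power_mult_distrib)
    ultimately show "1 / of_nat (j + 1 - i) * ((-1) ^ i * gregory i) =
         (-1) ^ j * (gregory i * ((-1) ^ (j - i) / of_nat (Suc (j - i))))"
      using \<open>i \<in> {..j}\<close> by (simp add: Suc_diff_le power2_eq_square field_simps)
  qed
  also have "\<dots> = (if j = 0 then 1 else 0)" using e by simp
  finally show ?thesis .
qed

lemma kaluza:
  fixes M :: "nat \<Rightarrow> rat"
  assumes E: "\<And>j. (\<Sum>i\<le>j. (1 / of_nat (j + 1 - i)) * M i) = (if j = 0 then 1 else 0)"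
  shows "n \<ge> 1 \<Longrightarrow> M n < 0"
proof (induction n rule: less_induct)
  case (less n)
  have M0: "M 0 = 1" using E[of 0] by simp
  show ?case
  proof (cases "n = 1")
    case True
    have "(\<Sum>i\<le>1. (1 / of_nat (1 + 1 - i)) * M i) = 0" using E[of 1] by simp
    then have "M 0 / 2 + M 1 = 0" by (simp add: atMost_Suc)
    then show ?thesis using M0 True by simp
  next
    case False
    then obtain m where n: "n = Suc m" and m1: "m \<ge> 1" using less.prems
      by (metis One_nat_def Suc_le_D le_antisym not_less_eq_eq)
    have split: "{..k} = insert 0 {1..k}" for k :: nat by auto
    define S1 where "S1 = (\<Sum>i\<in>{1..m}. M i / of_nat (m + 1 - i))"
    define S2 where "S2 = (\<Sum>i\<in>{1..m}. M i / of_nat (m + 2 - i))"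
    have "(\<Sum>i\<le>m. (1 / of_nat (m + 1 - i)) * M i) = 0" using E[of m] m1 by simp
    then have E1: "M 0 / of_nat (m+1) + S1 = 0"
      unfolding split S1_def by (simp add: sum.insert)
    have "(\<Sum>i\<le>Suc m. (1 / of_nat (Suc m + 1 - i)) * M i) = 0" using E[of "Suc m"] by simp
    then have "M (Suc m) + (\<Sum>i\<le>m. (1 / of_nat (m + 2 - i)) * M i) = 0"
      by (simp add: atMost_Suc add.commute)
    then have E2: "M (Suc m) + M 0 / of_nat (m+2) + S2 = 0"
      unfolding split S2_def by (simp add: sum.insert add.assoc)
    have key: "M (Suc m) = (\<Sum>i\<in>{1..m}. M i * ((of_nat m + 1) / ((of_nat m + 2) * of_nat (m + 1 - i)) - 1 / of_nat (m + 2 - i)))"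
    proof -
      have "(\<Sum>i\<in>{1..m}. M i * ((of_nat m + 1) / ((of_nat m + 2) * of_nat (m + 1 - i)) - 1 / of_nat (m + 2 - i)))
          = (of_nat m + 1) / (of_nat m + 2) * S1 - S2"
        unfolding S1_def S2_def sum_distrib_left sum_subtractf[symmetric]
        by (intro sum.cong refl) (simp add: field_simps)
      also have "\<dots> = M (Suc m)" using E1 E2 M0
        by (simp add: field_simps)
      finally show ?thesis by simp
    qed
    have "(\<Sum>i\<in>{1..m}. M i * ((of_nat m + 1) / ((of_nat m + 2) * of_nat (m + 1 - i)) - 1 / of_nat (m + 2 - i))) < (\<Sum>i\<in>{1..m}. 0)"
    proof (rule sum_strict_mono)
      fix i assume i: "i \<in> {1..m}"
      then have Mi: "M i < 0" using less.IH n by auto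
      define k :: rat where "k = of_nat (m + 1 - i)"
      have k1: "k \<ge> 1" "k \<le> of_nat m" using i by (auto simp: k_def of_nat_diff)
      have k2: "of_nat (m + 2 - i) = k + 1" using i by (simp add: k_def of_nat_diff)
      have "1 / (k + 1) < (of_nat m + 1) / ((of_nat m + 2) * k)"
      proof -
        have p: "(of_nat m + 2) * k > 0" using k1 by simp
        have "(of_nat m + 2) * k * 1 < (of_nat m + 1) * (k + 1)" using k1 by (simp add: algebra_simps)
        then show ?thesis using p k1 by (simp add: frac_less_eq divide_neg_pos)
      qed
      then show "M i * ((of_nat m + 1) / ((of_nat m + 2) * of_nat (m + 1 - i)) - 1 / of_nat (m + 2 - i)) < 0"
        using Mi unfolding k2 k_def[symmetric] by (simp add: mult_neg_pos)
    qed (use m1 in auto)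
    then show ?thesis using key n by simp
  qed
qed

lemma gregory_nz: "gregory j \<noteq> 0"
proof (cases "j = 0")
  case True
  then show ?thesis using greg_rec[of 0] by simp
next
  case False
  then have "(-1)^j * gregory j < 0" using kaluza[OF greg_rec, of j] by simp
  then show ?thesis by auto
qed


lemma coeff_mult_bound:
  fixes p q :: "rat poly"
  assumes "degree p \<le> m" "degree q \<le> n"
  shows "coeff (p * q) (m + n) = coeff p m * coeff q n"
proof (cases "degree p = m \<and> degree q = n")
  case True then show ?thesis using coeff_mult_degree_sum[of p q] by simp
next
  case False
  then have "degree p < m \<or> degree q < n" using assms by auto
  moreover have "degree (p * q) < m + n" using degree_mult_le[of p q] assms calculation by linarith
  ultimately show ?thesis by (auto simp: coeff_eq_0)
qed

theorem lemma4p2: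
  fixes c :: "nat \<Rightarrow> rat poly" and B :: "nat \<Rightarrow> rat"
  assumes hc: "\<And>j. (\<Sum>i\<le>j. smult (1 / fact (j + 1 - i)) (gpoch 1 qvar (j + 1 - i))
                     * smult (1 / fact i) (c i)) = (if j = 0 then 1 else 0)"
      and hB: "\<And>j. (\<Sum>i\<le>j. of_nat ((j + 1) choose i) * B i) = (if j = 0 then 1 else 0)"
  shows "(\<forall>j. degree (c j) = j \<and> lead_coeff (c j) = (-1) ^ j * fact j * gregory j
              \<and> coeff (c j) 0 = B j)
         \<and> (\<forall>q::rat. q \<noteq> 0 \<longrightarrow>
           Abs_fps (\<lambda>j. poly (c j) q / fact j) = fps_X / (powq_series q - 1))"
proof -
  define T where "T j i = smult (1 / fact (j + 1 - i)) (gpoch 1 qvar (j + 1 - i)) * smult (1 / fact i) (c i)" for j i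
  have hcT: "(\<Sum>i\<le>j. T j i) = (if j = 0 then 1 else 0)" for j
    using hc[of j] by (simp add: T_def)
  have hx: "(\<Sum>i\<le>j. gpoch 1 x (j + 1 - i) / fact (j + 1 - i) * (poly (c i) x / fact i)) = (if j = 0 then 1 else 0)" for x j
  proof -
    have "poly (\<Sum>i\<le>j. T j i) x = (if j = 0 then 1 else 0)" using hcT[of j] by simp
    then show ?thesis by (simp add: T_def poly_sum gpoch_poly mult_ac)
  qed
  have cB: "coeff (c j) 0 = B j" for j
  proof -
    have "poly (c j) 0 = B j"
    proof (rule uniq[where a = "\<lambda>j i. of_nat ((j + 1) choose i)" and d = "\<lambda>j. if j = 0 then 1 else 0"])
      fix j
      have "(\<Sum>i\<le>j. 1 / fact (j + 1 - i) * (poly (c i) 0 / fact i)) = (if j = 0 then 1 else (0::rat))"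
        using hx[of 0 j] by (simp add: gpoch_def)
      then have "fact (j+1) * (\<Sum>i\<le>j. 1 / fact (j + 1 - i) * (poly (c i) 0 / fact i)) = (if j = 0 then 1 else (0::rat))"
        by simp
      moreover have "fact (j+1) * (\<Sum>i\<le>j. 1 / fact (j + 1 - i) * (poly (c i) 0 / fact i))
          = (\<Sum>i\<le>j. of_nat ((j + 1) choose i) * poly (c i) 0)"
        unfolding sum_distrib_left
      proof (intro sum.cong refl)
        fix i assume "i \<in> {..j}"
        then have "of_nat ((j + 1) choose i) = (fact (j+1) / (fact i * fact (j + 1 - i)) :: rat)"
          by (intro binomial_fact) auto
        then show "fact (j + 1) * (1 / fact (j + 1 - i) * (poly (c i) 0 / fact i)) =
          of_nat ((j + 1) choose i) * poly (c i) 0" by simp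
      qed
      ultimately show "(\<Sum>i\<le>j. of_nat ((j + 1) choose i) * poly (c i) 0) = (if j = 0 then 1 else (0::rat))"
        by simp
    qed (use hB in auto)
    then show ?thesis by (simp add: poly_0_coeff_0)
  qed
  have Tdeg: "degree (T j i) \<le> j" if "i \<le> j" "\<And>k. k < j \<Longrightarrow> degree (c k) \<le> k" "i < j" for i j
  proof -
    have "degree (gpoch 1 qvar (Suc (j - i))) \<le> j - i" using gpoch_deg by blast
    then have "degree (gpoch 1 qvar (j + 1 - i)) \<le> j - i" using that by (simp add: Suc_diff_le)
    moreover have "degree (c i) \<le> i" using that by auto
    ultimately have "degree (T j i) \<le> (j - i) + i" unfolding T_def
      using degree_mult_le degree_smult_le by (meson add_le_mono order_trans)
    then show ?thesis using that by simp
  qed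
  have Tjj: "T j j = smult (1 / fact j) (c j)" for j
    by (simp add: T_def gpoch_def)
  have cexp: "c j = smult (fact j) ((if j = 0 then 1 else 0) - (\<Sum>i<j. T j i))" for j
  proof -
    have "T j j + (\<Sum>i<j. T j i) = (if j = 0 then 1 else 0)"
      using hcT[of j] by (simp add: lessThan_Suc_atMost[symmetric] add.commute)
    then have "smult (1 / fact j) (c j) = (if j = 0 then 1 else 0) - (\<Sum>i<j. T j i)"
      unfolding Tjj by (simp add: algebra_simps)
    then show ?thesis by (metis (no_types) fact_nonzero smult_smult of_nat_fact div_by_1 divide_self_if
          nonzero_mult_div_cancel_left smult_1_left times_divide_eq_right)
  qed
  have deg: "degree (c j) \<le> j" for j
  proof (induction j rule: less_induct)
    case (less j)
    have "degree ((if j = 0 then 1 else 0) - (\<Sum>i<j. T j i)) \<le> j"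
      by (intro degree_diff_le degree_sum_le) (auto intro: Tdeg less)
    then show ?case by (subst cexp) (simp add: degree_smult_le order_trans)
  qed
  have cT: "coeff (T j i) j = 1 / of_nat (j + 1 - i) * (coeff (c i) i / fact i)" if "i \<le> j" for i j
  proof -
    have g: "degree (gpoch 1 qvar (j + 1 - i)) \<le> j - i" "coeff (gpoch 1 qvar (j + 1 - i)) (j - i) = fact (j - i)"
      using gpoch_deg[of "j - i"] that by (simp_all add: Suc_diff_le)
    have "coeff (T j i) j = coeff (T j i) ((j - i) + i)" using that by simp
    also have "\<dots> = 1 / fact (j + 1 - i) * fact (j - i) * (1 / fact i * coeff (c i) i)"
      unfolding T_def by (subst coeff_mult_bound) (use g deg in \<open>auto simp: degree_smult_le\<close>)
    also have "fact (j + 1 - i) = (of_nat (j + 1 - i) * fact (j - i) :: rat)"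
      using that by (simp add: Suc_diff_le)
    finally show ?thesis by simp
  qed
  have lc: "coeff (c j) j / fact j = (-1)^j * gregory j" for j
  proof (rule uniq[where a = "\<lambda>j i. 1 / of_nat (j + 1 - i)" and d = "\<lambda>j. if j = 0 then 1 else 0"])
    fix j
    have "coeff (\<Sum>i\<le>j. T j i) j = (if j = 0 then 1 else 0)" using hcT[of j] by simp
    then show "(\<Sum>i\<le>j. 1 / of_nat (j + 1 - i) * (coeff (c i) i / fact i)) = (if j = 0 then 1 else 0)"
      by (simp add: coeff_sum cT)
  qed (use greg_rec in auto)
  have part1: "degree (c j) = j \<and> lead_coeff (c j) = (-1) ^ j * fact j * gregory j \<and> coeff (c j) 0 = B j" for j
  proof -
    have cj: "coeff (c j) j = (-1) ^ j * fact j * gregory j" using lc[of j] by (simp add: field_simps)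
    then have "coeff (c j) j \<noteq> 0" using gregory_nz[of j] by simp
    then have "degree (c j) = j" using deg[of j] le_degree by (meson le_antisym)
    then show ?thesis using cj cB by simp
  qed
  have part2: "Abs_fps (\<lambda>j. poly (c j) q / fact j) = fps_X / (powq_series q - 1)" if q: "q \<noteq> 0" for q
  proof -
    define F where "F = Abs_fps (\<lambda>n. powq_series q $ Suc n)"
    define C where "C = Abs_fps (\<lambda>j. poly (c j) q / fact j)"
    have F0: "F $ 0 \<noteq> 0" by (simp add: F_def powq_nth[OF q] gpoch_def)
    have PF: "powq_series q - 1 = fps_X * F"
    proof (intro fps_ext)
      fix n show "(powq_series q - 1) $ n = (fps_X * F) $ n"
        by (cases n) (simp_all add: F_def powq_nth[OF q] gpoch_def)
    qed
    have "F * C = 1"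
    proof (intro fps_ext)
      fix j
      have "(F * C) $ j = (\<Sum>i=0..j. C $ i * F $ (j - i))" by (simp add: fps_mult_nth mult.commute)
      also have "\<dots> = (\<Sum>i\<le>j. gpoch 1 q (j + 1 - i) / fact (j + 1 - i) * (poly (c i) q / fact i))"
        unfolding atLeast0AtMost
        by (intro sum.cong refl) (auto simp: F_def C_def powq_nth[OF q] Suc_diff_le mult_ac)
      also have "\<dots> = 1 $ j" using hx[of q j] by simp
      finally show "(F * C) $ j = 1 $ j" .
    qed
    then have "inverse F = C" by (rule fps_inverse_unique)
    then show ?thesis unfolding PF X_div_X_times[OF F0] C_def by simp
  qed
  show ?thesis using part1 part2 by blast
qed

end
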